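(* Let $s,k$ be positive integers with $s>2\cdot10^6$, and let $n=\lceil 3e(s+1)k\rceil$. Let $\mathcal F\subset\binom{[n]}{k}$ be a nonempty shifted family and let $$\beta:=\min_{F\in\mathcal F}\ \max_{\ell\in[n]}\frac{|F\cap[\ell]|}{\ell},$$ i.e. $\beta$ is the largest rational number such that for every $F\in\mathcal F$ there is $\ell$ with $|F\cap[\ell]|\ge\beta\ell$. If $\beta>\frac{4}{3(s+1)}$, then $|\mathcal F|<\binom{n}{k}-\binom{n-s}{k}$.
   Context: $[n]=\{1,\ldots,n\}$; $\binom{X}{k}$ is the family of all $k$-subsets of $X$. A family $\mathcal F\subset\binom{[n]}{k}$ is shifted if whenever $A\in\mathcal F$ and $B$ is obtained from $A$ by replacing some elements with smaller elements, then $B\in\mathcal F$. Note $\binom{n}{k}-\binom{n-s}{k}$ is the number of $k$-subsets of $[n]$ meeting $[s]$. *)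

theory Defs
  imports "HOL-Analysis.Analysis"
begin

text \<open>A family of k-subsets of [n] is shifted: replacing an element j of a member by a
smaller element i not in the member gives again a member (elementary shifts; the
general "replace some elements by smaller ones" closure follows by iteration).\<close>
definition shifted :: "nat set set \<Rightarrow> bool" where
  "shifted F \<longleftrightarrow> (\<forall>A\<in>F. \<forall>i j. i \<ge> 1 \<and> i < j \<and> j \<in> A \<and> i \<notin> A \<longrightarrow> insert i (A - {j}) \<in> F)"

definition beta :: "nat \<Rightarrow> nat set set \<Rightarrow> real" where
  "beta n F = Min ((\<lambda>A. Max ((\<lambda>l. real (card (A \<inter> {1..l})) / real l) ` {1..n})) ` F)"

end

theory Submission
  imports Defs
begin


lemma pascal_sum:
  assumes "k \<ge> 1" "L + d \<le> n"
  shows "(n - L) choose k \<ge> ((n - (L + d)) choose k) + d * ((n - (L + d)) choose (k - 1))"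
  using assms(2)
proof (induction d)
  case 0 then show ?case by simp
next
  case (Suc d)
  define M where "M = n - (L + Suc d)"
  have e: "n - (L + d) = Suc M" using Suc.prems unfolding M_def by simp
  obtain k' where k: "k = Suc k'" using assms(1) by (cases k) auto
  have IH: "(n - L) choose k \<ge> (Suc M choose k) + d * (Suc M choose (k - 1))"
    using Suc by (simp add: e)
  have "Suc M choose k = (M choose k) + (M choose (k - 1))" by (simp add: k)
  moreover have mm: "Suc M choose (k - 1) \<ge> M choose (k - 1)" by (intro binomial_right_mono) simp
  moreover have "d * (M choose (k - 1)) \<le> d * (Suc M choose (k - 1))"
    using mm by (rule mult_le_mono2)
  ultimately have "(n - L) choose k \<ge> (M choose k) + (M choose (k - 1)) + d * (M choose (k - 1))"
    using IH by linarith
  then show ?case by (simp add: M_def)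
qed

lemma lower_binom:
  fixes N0 K M :: nat
  assumes "j \<le> N0" "N0 - j \<ge> M" "M > 0"
  shows "real (N0 - j choose K) \<ge> real (N0 choose K) * (1 - real j * real K / real M)"
  using assms
proof (induction j)
  case 0 then show ?case by simp
next
  case (Suc j)
  define N where "N = N0 - j"
  have N1: "N \<ge> 1" "N0 - Suc j = N - 1" "N \<ge> M" using Suc.prems unfolding N_def by auto
  have IH: "real (N choose K) \<ge> real (N0 choose K) * (1 - real j * real K / real M)"
    using Suc by (simp add: N_def)
  have id: "real (N - K) * real (N choose K) = real N * real (N - 1 choose K)"
    using binomial_absorb_comp[of N K] by (metis of_nat_mult)
  have "real (N - K) \<ge> real N - real K" by simp
  hence "real N * real (N - 1 choose K) \<ge> (real N - real K) * real (N choose K)"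
    using id by (metis mult_right_mono of_nat_0_le_iff)
  hence a: "real (N - 1 choose K) \<ge> real (N choose K) - real K * real (N choose K) / real N"
    using N1 by (simp add: field_simps)
  have b: "real (N choose K) \<le> real (N0 choose K)"
    using binomial_right_mono[of N N0 K] by (simp add: N_def)
  have "real K * real (N choose K) / real N \<le> real K * real (N0 choose K) / real M"
    using b N1 Suc.prems by (intro frac_le mult_left_mono) auto
  with a IH have "real (N - 1 choose K) \<ge> real (N0 choose K) * (1 - real j * real K / real M) - real K * real (N0 choose K) / real M"
    by linarith
  moreover have "real (N0 choose K) * (1 - real (Suc j) * real K / real M) = real (N0 choose K) * (1 - real j * real K / real M) - real K * real (N0 choose K) / real M"
    using Suc.prems by (simp add: field_simps)
  ultimately show ?case using N1 by simp
qed

lemma upper_binom: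
  fixes n k m :: nat
  assumes "1 \<le> m" "m \<le> k" "k \<le> n"
  shows "real (n - m choose (k - m)) \<le> (real k / real n) ^ (m - 1) * real (n - 1 choose (k - 1))"
  using assms(1,2)
proof (induction m rule: dec_induct)
  case base then show ?case by simp
next
  case (step m)
  define N where "N = n - m"
  define K where "K = k - m"
  have K0: "K > 0" using step unfolding K_def by simp
  have "real K * real (N choose K) = real N * real (N - 1 choose (K - 1))"
    using times_binomial_minus1_eq[OF K0, of N] by (metis of_nat_mult)
  moreover have NK: "real N > 0" using step assms unfolding N_def by simp
  ultimately have c: "real (N - 1 choose (K - 1)) = real K / real N * real (N choose K)"
    by (simp add: field_simps)
  have "real K / real N \<le> real k / real n"
    using step assms NK unfolding K_def N_def
    by (simp add: divide_simps of_nat_diff algebra_simps)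
  hence "real K / real N * real (N choose K) \<le> real k / real n * real (N choose K)"
    by (rule mult_right_mono) simp
  hence "real (N - 1 choose (K - 1)) \<le> real k / real n * real (N choose K)"
    using c by simp
  also have "\<dots> \<le> real k / real n * ((real k / real n) ^ (m - 1) * real (n - 1 choose (k - 1)))"
    using step.IH step by (intro mult_left_mono) (auto simp: N_def K_def)
  finally have f: "real (N - 1 choose (K - 1)) \<le> real k / real n * ((real k / real n) ^ (m - 1) * real (n - 1 choose (k - 1)))" .
  have e1: "N - 1 = n - Suc m" "K - 1 = k - Suc m" unfolding N_def K_def by auto
  have e2: "(real k / real n) ^ (Suc m - 1) = real k / real n * (real k / real n) ^ (m - 1)"
    using step(1) by (cases m) auto
  show ?case using f unfolding e1 e2 by (simp only: mult.assoc)
qed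



lemma geo_sum:
  fixes t :: "nat \<Rightarrow> real"
  assumes "\<And>m. m \<ge> 2 \<Longrightarrow> t (Suc m) \<le> t m / 4" and "2 \<le> k"
  shows "(\<Sum>m=2..k. t m) \<le> 4/3 * t 2 - t k / 3"
  using assms(2)
proof (induction k rule: dec_induct)
  case base then show ?case by simp
next
  case (step k)
  have "(\<Sum>m=2..Suc k. t m) = (\<Sum>m=2..k. t m) + t (Suc k)"
    using step by simp
  also have "\<dots> \<le> 4/3 * t 2 - t k / 3 + t (Suc k)" using step by simp
  also have "\<dots> \<le> 4/3 * t 2 - t (Suc k) / 3" using assms(1)[OF step(1)] by simp
  finally show ?case .
qed

lemma t_ratio:
  fixes x :: real
  assumes "x > 0" "x * exp 1 \<le> 1/4" "m \<ge> 1"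
  shows "(real (Suc m) * x) ^ Suc m / fact (Suc m) \<le> ((real m * x) ^ m / fact m) / 4"
proof -
  have m0: "real m > 0" using assms by simp
  have "1 + 1 / real m \<le> exp (1 / real m)" by (rule exp_ge_add_one_self)
  hence "(1 + 1 / real m) ^ m \<le> exp (1 / real m) ^ m"
    by (intro power_mono) (use m0 in auto)
  also have "\<dots> = exp (real m * (1 / real m))" by (rule exp_of_nat_mult[symmetric])
  also have "\<dots> = exp 1" using m0 by simp
  finally have p: "(1 + 1 / real m) ^ m \<le> exp 1" .
  have q: "real (Suc m) ^ m = real m ^ m * (1 + 1 / real m) ^ m"
    using m0 by (simp add: power_mult_distrib[symmetric] field_simps)
  have "(real (Suc m) * x) ^ Suc m / fact (Suc m) = (real (Suc m) * (x * (x ^ m * real (Suc m) ^ m))) / (real (Suc m) * fact m)"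
    by (simp only: power_Suc power_mult_distrib fact_Suc of_nat_mult mult_ac)
  also have "\<dots> = x * (x ^ m * real (Suc m) ^ m / fact m)"
    by (metis mult_divide_mult_cancel_left_if of_nat_0_eq_iff nat.distinct(1) times_divide_eq_right)
  also have "\<dots> = x * ((1 + 1 / real m) ^ m) * (x ^ m * real m ^ m / fact m)"
    unfolding q by (simp add: field_simps)
  also have "\<dots> \<le> x * exp 1 * (x ^ m * real m ^ m / fact m)"
    using p assms(1) by (intro mult_right_mono mult_left_mono) auto
  also have "\<dots> \<le> 1/4 * (x ^ m * real m ^ m / fact m)"
    using assms(1,2) by (intro mult_right_mono) auto
  finally show ?thesis by (simp add: power_mult_distrib field_simps)
qed

lemma binom_t:
  fixes L m :: nat and a r x :: real
  assumes "real L \<le> real m * a" "a * r \<le> x" "r \<ge> 0" "a \<ge> 0"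
  shows "real (L choose m) * r ^ m \<le> (real m * x) ^ m / fact m"
proof -
  have "(L choose m) * fact m \<le> L ^ m" by (rule binomial_fact_pow)
  hence "real (L choose m) * fact m \<le> real L ^ m"
    by (metis of_nat_fact of_nat_le_iff of_nat_mult of_nat_power)
  hence c: "real (L choose m) \<le> real L ^ m / fact m" by (simp add: field_simps)
  have "real (L choose m) * r ^ m \<le> real L ^ m / fact m * r ^ m"
    using c assms by (intro mult_right_mono) auto
  also have "\<dots> = (real L * r) ^ m / fact m" by (simp add: power_mult_distrib)
  also have "\<dots> \<le> (real m * x) ^ m / fact m"
  proof (intro divide_right_mono power_mono)
    have "real L * r \<le> real m * a * r" using assms by (intro mult_right_mono) auto
    also have "\<dots> \<le> real m * x" using assms
      by (metis mult.assoc mult_left_mono of_nat_0_le_iff)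
    finally show "real L * r \<le> real m * x" .
  qed (use assms in auto)
  finally show ?thesis .
qed



lemma count_T1:
  fixes n k L :: nat
  shows "card {A. A \<subseteq> {1..n} \<and> card A = k \<and> 1 \<le> card (A \<inter> {1..L})} \<le> (n choose k) - ((n - L) choose k)"
proof -
  define K where "K = {A. A \<subseteq> {1..n} \<and> card A = k}"
  define B where "B = {A. A \<subseteq> {L<..n} \<and> card A = k}"
  have fK: "finite K" unfolding K_def by (rule finite_subset[of _ "Pow {1..n}"]) auto
  have BK: "B \<subseteq> K" unfolding B_def K_def by auto
  have cK: "card K = n choose k" unfolding K_def using n_subsets[of "{1..n}" k] by simp
  have cB: "card B = (n - L) choose k" unfolding B_def using n_subsets[of "{L<..n}" k] by simp
  have sub: "{A. A \<subseteq> {1..n} \<and> card A = k \<and> 1 \<le> card (A \<inter> {1..L})} \<subseteq> K - B"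
  proof
    fix A assume A: "A \<in> {A. A \<subseteq> {1..n} \<and> card A = k \<and> 1 \<le> card (A \<inter> {1..L})}"
    hence "A \<inter> {1..L} \<noteq> {}" by auto
    then obtain y where "y \<in> A" "y \<le> L" by auto
    hence "A \<notin> B" unfolding B_def by auto
    with A show "A \<in> K - B" unfolding K_def by auto
  qed
  have "card {A. A \<subseteq> {1..n} \<and> card A = k \<and> 1 \<le> card (A \<inter> {1..L})} \<le> card (K - B)"
    using sub fK by (intro card_mono) auto
  also have "card (K - B) = card K - card B"
    using BK fK by (intro card_Diff_subset) (auto intro: finite_subset)
  finally show ?thesis using cK cB by simp
qed

lemma count_Tm:
  fixes n k m Lm :: nat
  assumes "m \<le> k"
  shows "card {A. A \<subseteq> {1..n} \<and> card A = k \<and> m \<le> card (A \<inter> {1..Lm})} \<le> (Lm choose m) * ((n - m) choose (k - m))"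
proof -
  define P where "P = {1..Lm} \<inter> {1..n}"
  define Bs where "Bs = {B. B \<subseteq> P \<and> card B = m}"
  define G where "G B = (\<lambda>C. B \<union> C) ` {C. C \<subseteq> {1..n} - B \<and> card C = k - m}" for B
  have fP: "finite P" unfolding P_def by simp
  have fBs: "finite Bs" unfolding Bs_def using fP by simp
  have sub: "{A. A \<subseteq> {1..n} \<and> card A = k \<and> m \<le> card (A \<inter> {1..Lm})} \<subseteq> (\<Union>B\<in>Bs. G B)"
  proof
    fix A assume A: "A \<in> {A. A \<subseteq> {1..n} \<and> card A = k \<and> m \<le> card (A \<inter> {1..Lm})}"
    then obtain B where B: "B \<subseteq> A \<inter> {1..Lm}" "card B = m" "finite B"
      using obtain_subset_with_card_n[of m "A \<inter> {1..Lm}"] by auto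
    have fA: "finite A" using A by (auto intro: finite_subset)
    have "B \<subseteq> P" using A B unfolding P_def by blast
    hence "B \<in> Bs" using B unfolding Bs_def by auto
    moreover have "A = B \<union> (A - B)" using B by auto
    moreover have "card (A - B) = k - m" using A B fA by (simp add: card_Diff_subset)
    moreover have "A - B \<subseteq> {1..n} - B" using A by auto
    ultimately show "A \<in> (\<Union>B\<in>Bs. G B)" unfolding G_def by blast
  qed
  have cG: "card (G B) \<le> (n - m) choose (k - m)" if "B \<in> Bs" for B
  proof -
    have B: "B \<subseteq> {1..n}" "card B = m" "finite B" using that fP unfolding Bs_def P_def
      by (auto intro: finite_subset)
    have "card (G B) \<le> card {C. C \<subseteq> {1..n} - B \<and> card C = k - m}"
      unfolding G_def by (rule card_image_le) simp
    also have "\<dots> = card ({1..n} - B) choose (k - m)" by (rule n_subsets) simp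
    also have "card ({1..n} - B) = n - m" using B by (simp add: card_Diff_subset)
    finally show ?thesis .
  qed
  have "card {A. A \<subseteq> {1..n} \<and> card A = k \<and> m \<le> card (A \<inter> {1..Lm})} \<le> card (\<Union>B\<in>Bs. G B)"
    using sub fBs by (intro card_mono) (auto simp: G_def)
  also have "\<dots> \<le> (\<Sum>B\<in>Bs. card (G B))" by (rule card_UN_le[OF fBs])
  also have "\<dots> \<le> (\<Sum>B\<in>Bs. (n - m) choose (k - m))" by (rule sum_mono) (use cG in auto)
  also have "\<dots> = card Bs * ((n - m) choose (k - m))" by simp
  also have "card Bs = card P choose m" unfolding Bs_def by (rule n_subsets[OF fP])
  also have "\<dots> \<le> Lm choose m"
    by (rule binomial_right_mono) (rule order.trans[OF card_mono[of "{1..Lm}" P]], auto simp: P_def)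
  finally show ?thesis by (meson le_trans mult_le_mono1 order_refl)
qed



theorem lemma3:
  fixes s k n :: nat and F :: "nat set set"
  assumes "s > 2 * 10^6" and "k > 0"
    and "n = nat \<lceil>3 * exp 1 * real (s + 1) * real k\<rceil>"
    and "F \<subseteq> {A. A \<subseteq> {1..n} \<and> card A = k}"
    and "F \<noteq> {}"
    and "shifted F"
    and "beta n F > 4 / (3 * real (s + 1))"
  shows "card F < (n choose k) - ((n - s) choose k)"
proof -
  define E where "E = exp (1::real)"
  have E: "27/10 < E" "E < 272/100" unfolding E_def using e_approx_32 e_less_272
    by (auto simp: abs_if split: if_split_asm)
  have s: "real s \<ge> 2000001" using assms(1) by simp
  have k1: "real k \<ge> 1" using assms(2) by simp
  define y where "y = 3 * E * real (s + 1) * real k"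
  have y0: "y > 0" unfolding y_def using E k1 by simp
  have rn: "real n = of_int \<lceil>y\<rceil>" using assms(3) y0 unfolding y_def E_def by simp
  have n1: "real n \<ge> y" using rn by linarith
  have n2: "real n < y + 1" using rn by linarith
  have yk: "y \<ge> real (s + 1) * real k"
  proof -
    have "y = (3 * E) * (real (s + 1) * real k)" unfolding y_def by simp
    moreover have "3 * E \<ge> 1" using E by simp
    ultimately show ?thesis using mult_right_mono[of 1 "3 * E" "real (s + 1) * real k"] by simp
  qed
  have "real (s + 1) * real k \<ge> real (s + 1)" using k1 by simp
  hence ns: "n > s" using n1 yk by linarith
  have "real (s + 1) * real k \<ge> real k" using k1 by (simp add: mult_le_cancel_right1)
  hence nk: "k \<le> n" using n1 yk by linarith
  define a where "a = 3 * real (s + 1) / 4"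
  have a0: "a > 0" unfolding a_def by simp
  define L where "L m = nat \<lfloor>real m * a\<rfloor>" for m :: nat
  have Lle: "real (L m) \<le> real m * a" for m
    unfolding L_def using a0 by simp
  define T where "T m = {A. A \<subseteq> {1..n} \<and> card A = k \<and> m \<le> card (A \<inter> {1..L m})}" for m
  have finF: "finite F" using assms(4) by (rule finite_subset) (rule finite_subset[of _ "Pow {1..n}"], auto)
  have keyA: "\<exists>l\<in>{1..n}. real l < real (card (A \<inter> {1..l})) * a" if A: "A \<in> F" for A
  proof -
    define g where "g A = Max ((\<lambda>l. real (card (A \<inter> {1..l})) / real l) ` {1..n})" for A
    have "beta n F \<le> g A" unfolding beta_def g_def using finF A by (intro Min_le) auto
    moreover have "g A \<in> (\<lambda>l. real (card (A \<inter> {1..l})) / real l) ` {1..n}"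
      unfolding g_def using ns by (intro Max_in) auto
    ultimately obtain l where l: "l \<in> {1..n}" "real (card (A \<inter> {1..l})) / real l \<ge> beta n F" by auto
    have "4 / (3 * real (s + 1)) = 1 / a" unfolding a_def by simp
    hence "1 / a < real (card (A \<inter> {1..l})) / real l"
      using l(2) assms(7) by linarith
    hence "real l < real (card (A \<inter> {1..l})) * a" using l a0 by (simp add: field_simps)
    with l show ?thesis by blast
  qed
  have FT: "F \<subseteq> T 1 \<union> (\<Union>m\<in>{2..k}. T m)"
  proof
    fix A assume A: "A \<in> F"
    then obtain l where l: "l \<in> {1..n}" "real l < real (card (A \<inter> {1..l})) * a" using keyA by blast
    define m where "m = card (A \<inter> {1..l})"
    have AK: "A \<subseteq> {1..n}" "card A = k" using A assms(4) by auto
    have fA: "finite A" using AK by (auto intro: finite_subset)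
    have "m \<ge> 1" using l unfolding m_def by (cases "card (A \<inter> {1..l})") auto
    moreover have "m \<le> k" unfolding m_def using AK fA by (metis Int_lower1 card_mono)
    moreover have "l \<le> L m"
    proof -
      have "of_int (int l) \<le> real m * a" using l unfolding m_def by simp
      hence "int l \<le> \<lfloor>real m * a\<rfloor>" by (subst le_floor_iff) simp
      thus ?thesis unfolding L_def by simp
    qed
    hence "m \<le> card (A \<inter> {1..L m})" unfolding m_def using fA by (intro card_mono) auto
    ultimately show "A \<in> T 1 \<union> (\<Union>m\<in>{2..k}. T m)" unfolding T_def using AK
      by (cases "m = 1") auto
  qed
  have finT: "finite (T m)" for m unfolding T_def by (rule finite_subset[of _ "Pow {1..n}"]) auto
  define S where "S = (\<Sum>m=2..k. card (T m))"
  have cF: "card F \<le> card (T 1) + S"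
  proof -
    have "card F \<le> card (T 1 \<union> (\<Union>m\<in>{2..k}. T m))" using FT finT by (intro card_mono) auto
    also have "\<dots> \<le> card (T 1) + card (\<Union>m\<in>{2..k}. T m)" by (rule card_Un_le)
    also have "card (\<Union>m\<in>{2..k}. T m) \<le> S" unfolding S_def by (rule card_UN_le) simp
    finally show ?thesis by simp
  qed
  have cT1: "card (T 1) \<le> (n choose k) - ((n - L 1) choose k)" unfolding T_def by (rule count_T1)
  have cTm: "card (T m) \<le> (L m choose m) * ((n - m) choose (k - m))" if "m \<le> k" for m
    unfolding T_def using that by (rule count_Tm)
  define D where "D = real ((n - 1) choose (k - 1))"
  define r where "r = real k / real n"
  define x where "x = 1 / (4 * E)"
  have D0: "D > 0" unfolding D_def using nk assms(2) by simp
  have r0: "r > 0" unfolding r_def using nk assms(2) by simp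
  have ar: "a * r \<le> x"
  proof -
    have "a * r = 3 * real (s + 1) * real k / (4 * real n)" unfolding a_def r_def by simp
    also have "\<dots> \<le> 3 * real (s + 1) * real k / (4 * y)"
      using n1 y0 by (intro divide_left_mono) auto
    also have "\<dots> = x"
    proof -
      have p: "real (s + 1) * real k > 0" using k1 by simp
      have "3 * real (s + 1) * real k / (4 * y) = (3 * (real (s + 1) * real k)) / ((4 * E) * (3 * (real (s + 1) * real k)))"
        unfolding y_def by (simp add: mult_ac)
      also have "\<dots> = 1 / (4 * E)" using p E assms(2) by simp
      finally show ?thesis unfolding x_def .
    qed
    finally show ?thesis .
  qed
  have x0: "x > 0" unfolding x_def using E by simp
  have xE: "x * exp 1 \<le> 1/4" unfolding x_def E_def by simp
  define t where "t m = (real m * x) ^ m / fact m" for m :: nat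
  have Sbound: "real S \<le> D / r * (1 / (6 * E^2))"
  proof (cases "k \<ge> 2")
    case False
    then have "S = 0" unfolding S_def by simp
    then show ?thesis using D0 r0 E by simp
  next
    case True
    have "real S \<le> (\<Sum>m=2..k. real (L m choose m) * real ((n - m) choose (k - m)))"
      unfolding S_def of_nat_sum by (rule sum_mono) (use cTm in \<open>auto simp flip: of_nat_mult\<close>)
    also have "\<dots> \<le> (\<Sum>m=2..k. real (L m choose m) * (r ^ (m - 1) * D))"
      unfolding D_def r_def by (rule sum_mono, rule mult_left_mono, rule upper_binom) (use nk in auto)
    also have "\<dots> = (\<Sum>m=2..k. D / r * (real (L m choose m) * r ^ m))"
    proof (rule sum.cong)
      fix m assume "m \<in> {2..k}"
      then have "r ^ m = r * r ^ (m - 1)" by (cases m) auto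
      then show "real (L m choose m) * (r ^ (m - 1) * D) = D / r * (real (L m choose m) * r ^ m)"
        using r0 by (simp add: field_simps)
    qed simp
    also have "\<dots> = D / r * (\<Sum>m=2..k. real (L m choose m) * r ^ m)" by (simp add: sum_distrib_left)
    also have "\<dots> \<le> D / r * (\<Sum>m=2..k. t m)"
      unfolding t_def using D0 r0 by (intro mult_left_mono sum_mono binom_t[OF Lle ar]) (use a0 in auto)
    also have "\<dots> \<le> D / r * (1 / (6 * E^2))"
    proof -
      have "(\<Sum>m=2..k. t m) \<le> 4/3 * t 2 - t k / 3"
        by (rule geo_sum[OF _ True]) (unfold t_def, rule t_ratio[OF x0 xE], simp)
      also have "\<dots> \<le> 4/3 * t 2" unfolding t_def using x0 by simp
      also have "4/3 * t 2 = 1 / (6 * E^2)" unfolding t_def x_def using E by (simp add: field_simps power2_eq_square)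
      finally have "(\<Sum>m=2..k. t m) \<le> 1 / (6 * E^2)" .
      then show ?thesis using D0 r0 by (intro mult_left_mono) auto
    qed
    finally show ?thesis .
  qed
  have invr: "1 / r \<le> 3 * E * real (s + 1) + 1"
  proof -
    have "1 / r = real n / real k" unfolding r_def by simp
    also have "\<dots> \<le> (y + 1) / real k" using n2 k1 by (intro divide_right_mono) auto
    also have "\<dots> = 3 * E * real (s + 1) + 1 / real k" unfolding y_def using k1 by (simp add: field_simps)
    also have "\<dots> \<le> 3 * E * real (s + 1) + 1" using k1 by simp
    finally show ?thesis .
  qed
  define W where "W = (s - L 1) * ((n - s) choose (k - 1))"
  have L1s: "real (L 1) \<le> a" using Lle[of 1] by simp
  have L1s': "L 1 \<le> s" using L1s s unfolding a_def by simp
  have sL: "real (s - L 1) \<ge> (real s - 3) / 4" using L1s L1s' unfolding a_def by (simp add: of_nat_diff)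
  have frac: "real (s - 1) * real (k - 1) / real (n - s) \<le> 1 / (3 * E)"
  proof -
    have nsr: "real (n - s) \<ge> y - real s" using n1 ns by (simp add: of_nat_diff)
    have "3 * E * (real (s - 1) * real (k - 1)) \<le> 3 * E * (real s * (real k - 1))"
      using E k1 s assms(2) by (intro mult_left_mono mult_mono) (auto simp: of_nat_diff)
    also have "\<dots> \<le> y - real s"
    proof -
      have "y - 3 * E * (real s * (real k - 1)) = 3 * E * real k + 3 * E * real s"
        unfolding y_def by (simp add: algebra_simps)
      moreover have "3 * E * real s \<ge> real s" using E mult_right_mono[of 1 "3 * E" "real s"] by simp
      moreover have "3 * E * real k \<ge> 0" using E by simp
      ultimately show ?thesis by linarith
    qed
    also have "\<dots> \<le> real (n - s)" using nsr .
    finally have "3 * E * (real (s - 1) * real (k - 1)) \<le> real (n - s)" .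
    moreover have "real (n - s) > 0" using ns by simp
    ultimately show ?thesis using E by (simp add: field_simps)
  qed
  have lowW: "real ((n - s) choose (k - 1)) \<ge> D * (1 - 1 / (3 * E))"
  proof -
    have "real ((n - 1) - (s - 1) choose (k - 1)) \<ge> D * (1 - real (s - 1) * real (k - 1) / real (n - s))"
      unfolding D_def by (rule lower_binom) (use ns s in auto)
    moreover have "(n - 1) - (s - 1) = n - s" using s by simp
    moreover have "D * (1 - real (s - 1) * real (k - 1) / real (n - s)) \<ge> D * (1 - 1 / (3 * E))"
      using frac D0 by (intro mult_left_mono) auto
    ultimately show ?thesis by simp
  qed
  have numeric: "(3 * E * real (s + 1) + 1) * (1 / (6 * E^2)) < (real s - 3) / 4 * (1 - 1 / (3 * E))"
  proof -
    have Epos: "E > 0" using E by simp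
    have "2 * (3 * E * (real s + 1) + 1) < (real s - 3) * (E * (3 * E - 1))"
    proof -
      have "E * (3 * E - 1) \<ge> E * (71/10)" using E by (intro mult_left_mono) auto
      hence "(real s - 3) * (E * (3 * E - 1)) \<ge> (real s - 3) * (E * (71/10))"
        using s E by (intro mult_left_mono) auto
      moreover have "2 * (3 * E * (real s + 1) + 1) < (real s - 3) * (E * (71/10))"
      proof -
        have "E * (11/10 * real s - 273/10) \<ge> 27/10 * (11/10 * real s - 273/10)"
          using E s by (intro mult_right_mono) auto
        thus ?thesis using s by (simp add: algebra_simps)
      qed
      ultimately show ?thesis by linarith
    qed
    hence "2 * (3 * E * (real s + 1) + 1) / (12 * E^2) < (real s - 3) * (E * (3 * E - 1)) / (12 * E^2)"
      using Epos by (intro divide_strict_right_mono) auto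
    moreover have "(3 * E * real (s + 1) + 1) * (1 / (6 * E^2)) = 2 * (3 * E * (real s + 1) + 1) / (12 * E^2)"
      using Epos by (simp add: field_simps power2_eq_square)
    moreover have "(real s - 3) / 4 * (1 - 1 / (3 * E)) = (real s - 3) * (E * (3 * E - 1)) / (12 * E^2)"
      using Epos by (simp add: field_simps power2_eq_square)
    ultimately show ?thesis by (simp only:)
  qed
  have SW: "real S < real W"
  proof -
    have "real S \<le> D * (3 * E * real (s + 1) + 1) * (1 / (6 * E^2))"
    proof -
      have "D / r = D * (1 / r)" by simp
      also have "\<dots> \<le> D * (3 * E * real (s + 1) + 1)" using invr D0 by (intro mult_left_mono) auto
      finally show ?thesis using Sbound E by (smt (verit) mult_right_mono zero_le_divide_1_iff zero_le_power2 mult_nonneg_nonneg)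
    qed
    also have "\<dots> < D * ((real s - 3) / 4 * (1 - 1 / (3 * E)))"
      using mult_strict_left_mono[OF numeric D0] by (simp only: mult.assoc)
    also have "\<dots> = (real s - 3) / 4 * (D * (1 - 1 / (3 * E)))" by simp
    also have "\<dots> \<le> real (s - L 1) * real ((n - s) choose (k - 1))"
      using sL lowW s D0 E by (intro mult_mono) (auto simp: field_simps)
    also have "\<dots> = real W" unfolding W_def by simp
    finally show ?thesis .
  qed
  have SWn: "S < W" using SW by simp
  have pas: "(n - L 1) choose k \<ge> ((n - s) choose k) + W"
    using pascal_sum[of k "L 1" "s - L 1" n] assms(2) L1s' ns unfolding W_def by simp
  have mono1: "(n - L 1) choose k \<le> n choose k" by (rule binomial_right_mono) simp
  show ?thesis using cF cT1 SWn pas mono1 by linarith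
qed

end
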